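(* For $\mathbf{z}\in\mathrm{GT}_n^{\le m}$ and $M=\Phi(\mathbf{z})$, the decoration satisfies $F(\mathbf{z})=\sum_{k=1}^{\min(m-1,n-1)}\frac{\Delta_{\{k\}\cup[k+2,n],[1,n-k]}(M)+\Delta_{[k+1,n],[1,n-k-1]\cup\{n-k+1\}}(M)}{\Delta_{[k+1,n],[1,n-k]}(M)}+\mathbb{1}_{m<n}\Big(\frac{\Delta_{\{m\}\cup[m+2,n],[1,n-m]}(M)}{\Delta_{[m+1,n],[1,n-m]}(M)}+\sum_{j=1}^{n-m}\frac{\Delta_{[m+1,m+j],[1,j-1]\cup\{j+1\}}(M)}{\Delta_{[m+1,m+j],[1,j]}(M)}\Big).$
   Context: $\mathrm{GT}_n^{\le m}$ is the torus of arrays $\mathbf{z}=(z_{i,j})$, $z_{i,j}\in\mathbb{C}^*$, $1\le i\le m$, $i\le j\le n$; $p=\min(m,n)$. $E_{a,b}$ is a matrix unit; $W^i(y_i,\dots,y_n)=\sum_{k<i}E_{kk}+\sum_{k\ge i}y_kE_{kk}+\sum_{k=i}^{n-1}E_{k+1,k}$ ($n\times n$); $\Phi(\mathbf{z})=W^p(z_{p,p},\frac{z_{p,p+1}}{z_{p,p}},\dots,\frac{z_{p,n}}{z_{p,n-1}})\cdots W^1(z_{1,1},\frac{z_{1,2}}{z_{1,1}},\dots,\frac{z_{1,n}}{z_{1,n-1}})$. $\Delta_{I,J}(M)$ denotes the minor with rows $I$ and columns $J$; $\mathbb{1}_{m<n}$ is the indicator of $m<n$. The decoration is $F(\mathbf{z})=\sum_{1\le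 i\le m,\,i\le j\le n-1}\frac{z_{i,j+1}}{z_{i,j}}+\sum_{1\le i\le m-1,\,i\le j\le n-1}\frac{z_{i,j}}{z_{i+1,j+1}}+\mathbb{1}_{m<n}z_{m,m}$. *)

theory Defs
  imports Complex_Main "Jordan_Normal_Form.Determinant" "Jordan_Normal_Form.DL_Submatrix"
begin

text \<open>All indices below are 1-based as in the paper; JNF matrices are 0-based,
  so entry (a,b) of the paper is entry (a-1,b-1) of the JNF matrix.\<close>

text \<open>Matrix unit-based matrix W^i(y_i,...,y_n) (n x n); y is given as a function
  of the (1-based) index k, only y k for i \<le> k \<le> n is used.\<close>
definition Wmat :: "nat \<Rightarrow> nat \<Rightarrow> (nat \<Rightarrow> complex) \<Rightarrow> complex mat" where
  "Wmat n i y = mat n n (\<lambda>(a, b). let r = a + 1; c = b + 1 in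
      if r = c then (if r < i then 1 else y r)
      else if r = c + 1 \<and> i \<le> c \<and> c \<le> n - 1 then 1 else 0)"

definition Wargs :: "(nat \<Rightarrow> nat \<Rightarrow> complex) \<Rightarrow> nat \<Rightarrow> nat \<Rightarrow> complex" where
  "Wargs z i k = (if k = i then z i i else z i k / z i (k - 1))"

fun PhiAux :: "nat \<Rightarrow> (nat \<Rightarrow> nat \<Rightarrow> complex) \<Rightarrow> nat \<Rightarrow> complex mat" where
  "PhiAux n z 0 = 1\<^sub>m n"
| "PhiAux n z (Suc i) = Wmat n (Suc i) (Wargs z (Suc i)) * PhiAux n z i"

definition Phi :: "nat \<Rightarrow> nat \<Rightarrow> (nat \<Rightarrow> nat \<Rightarrow> complex) \<Rightarrow> complex mat" where
  "Phi m n z = PhiAux n z (min m n)"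

text \<open>The torus GT_n^{\<le>m}: arrays z_{i,j}, 1 \<le> i \<le> m, i \<le> j \<le> n, of nonzero numbers
  (values of z outside this index range are irrelevant).\<close>
definition in_GT :: "nat \<Rightarrow> nat \<Rightarrow> (nat \<Rightarrow> nat \<Rightarrow> complex) \<Rightarrow> bool" where
  "in_GT m n z \<longleftrightarrow> (\<forall>i j. 1 \<le> i \<and> i \<le> m \<and> i \<le> j \<and> j \<le> n \<longrightarrow> z i j \<noteq> 0)"

definition minor :: "complex mat \<Rightarrow> nat set \<Rightarrow> nat set \<Rightarrow> complex" where
  "minor M I J = det (submatrix M ((\<lambda>x. x - 1) ` I) ((\<lambda>x. x - 1) ` J))"

definition decoration :: "nat \<Rightarrow> nat \<Rightarrow> (nat \<Rightarrow> nat \<Rightarrow> complex) \<Rightarrow> complex" where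
  "decoration m n z =
     (\<Sum>i = 1..m. \<Sum>j = i..n - 1. z i (j + 1) / z i j)
   + (\<Sum>i = 1..m - 1. \<Sum>j = i..n - 1. z i j / z (i + 1) (j + 1))
   + (if m < n then z m m else 0)"

end

theory Submission
  imports Defs
begin


lemma mat_mult_fun:
  "mat k k (\<lambda>(i,j). \<Sum>t<k. X i t * Y t j) = mat k k (\<lambda>(i,j). X i j) * mat k k (\<lambda>(i,j). Y i j)"
  by (rule eq_matI) (auto simp: scalar_prod_def row_def col_def lessThan_atLeast0 intro!: sum.cong)

lemma det_prod_fun:
  "det (mat k k (\<lambda>(i,j). \<Sum>t<k. (X i t::'a::comm_ring_1) * Y t j)) = det (mat k k (\<lambda>(i,j). X i j)) * det (mat k k (\<lambda>(i,j). Y i j))"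
  unfolding mat_mult_fun by (rule det_mult) auto

lemma prod_list_upt: "prod_list (map g [0..<k]) = (\<Prod>i<k. g i)"
  by (induct k) (auto simp: lessThan_Suc mult.commute)

lemma det_lower_fun:
  assumes "\<And>i j. i < j \<Longrightarrow> j < k \<Longrightarrow> f i j = (0::'a::comm_ring_1)"
  shows "det (mat k k (\<lambda>(i,j). f i j)) = (\<Prod>i<k. f i i)"
proof -
  have "det (mat k k (\<lambda>(i,j). f i j)) = prod_list (diag_mat (mat k k (\<lambda>(i,j). f i j)))"
    by (rule det_lower_triangular[of k]) (auto simp: assms)
  also have "\<dots> = (\<Prod>i<k. mat k k (\<lambda>(i,j). f i j) $$ (i,i))"
    by (simp add: diag_mat_def prod_list_upt)
  also have "\<dots> = (\<Prod>i<k. f i i)" by (rule prod.cong) auto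
  finally show ?thesis .
qed

lemma det_upper_fun:
  assumes "\<And>i j. j < i \<Longrightarrow> i < k \<Longrightarrow> f i j = (0::'a::comm_ring_1)"
  shows "det (mat k k (\<lambda>(i,j). f i j)) = (\<Prod>i<k. f i i)"
proof -
  have "det (mat k k (\<lambda>(i,j). f i j)) = prod_list (diag_mat (mat k k (\<lambda>(i,j). f i j)))"
    by (rule det_upper_triangular[of _ k]) (auto simp: assms upper_triangular_def)
  also have "\<dots> = (\<Prod>i<k. mat k k (\<lambda>(i,j). f i j) $$ (i,i))"
    by (simp add: diag_mat_def prod_list_upt)
  also have "\<dots> = (\<Prod>i<k. f i i)" by (rule prod.cong) auto
  finally show ?thesis .
qed

lemma cofactor_col_indep:
  assumes "q < k" "i < k" "\<And>r j. r < k \<Longrightarrow> j < k \<Longrightarrow> j \<noteq> q \<Longrightarrow> f r j = g r j"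
  shows "cofactor (mat k k (\<lambda>(r,j). f r j)) i q = cofactor (mat k k (\<lambda>(r,j). g r j)) i q"
proof -
  have "mat_delete (mat k k (\<lambda>(r,j). f r j)) i q = mat_delete (mat k k (\<lambda>(r,j). g r j)) i q"
    unfolding mat_delete_def using assms by (intro eq_matI) auto
  thus ?thesis unfolding cofactor_def by simp
qed

lemma det_col_lin:
  assumes q: "q < k"
  shows "det (mat k k (\<lambda>(i,j). if j = q then a * u i + b * v i else X i j))
    = a * det (mat k k (\<lambda>(i,j). if j = q then u i else (X i j::'a::comm_ring_1)))
    + b * det (mat k k (\<lambda>(i,j). if j = q then v i else X i j))"
proof -
  let ?C = "\<lambda>i. cofactor (mat k k (\<lambda>(i,j). if j = q then u i else X i j)) i q"
  have c1: "cofactor (mat k k (\<lambda>(i,j). if j = q then a * u i + b * v i else X i j)) i q = ?C i"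
    if "i < k" for i by (rule cofactor_col_indep) (use q that in auto)
  have c2: "cofactor (mat k k (\<lambda>(i,j). if j = q then v i else X i j)) i q = ?C i"
    if "i < k" for i by (rule cofactor_col_indep) (use q that in auto)
  have "det (mat k k (\<lambda>(i,j). if j = q then a * u i + b * v i else X i j))
     = (\<Sum>i<k. (a * u i + b * v i) * ?C i)"
    by (subst laplace_expansion_column[OF _ q]) (auto simp: c1 q intro!: sum.cong)
  also have "\<dots> = a * (\<Sum>i<k. u i * ?C i) + b * (\<Sum>i<k. v i * ?C i)"
    by (simp add: algebra_simps sum.distrib sum_distrib_left)
  also have "(\<Sum>i<k. u i * ?C i) = det (mat k k (\<lambda>(i,j). if j = q then u i else X i j))"
    by (subst laplace_expansion_column[OF _ q]) (auto simp: q intro!: sum.cong)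
  also have "(\<Sum>i<k. v i * ?C i) = det (mat k k (\<lambda>(i,j). if j = q then v i else X i j))"
    by (subst laplace_expansion_column[OF _ q]) (auto simp: c2 q intro!: sum.cong)
  finally show ?thesis .
qed

lemma det_ident_cols:
  assumes "q1 \<noteq> q2" "q1 < k" "q2 < k" "\<And>i. i < k \<Longrightarrow> f i q1 = f i q2"
  shows "det (mat k k (\<lambda>(i,j). f i j)) = (0::'a::comm_ring_1)"
  by (rule det_identical_columns[of _ k q1 q2]) (use assms in \<open>auto intro!: eq_vecI\<close>)

lemma det_mat_cong:
  assumes "\<And>i j. i < k \<Longrightarrow> j < k \<Longrightarrow> f i j = g i j"
  shows "det (mat k k (\<lambda>(i,j). f i j)) = det (mat k k (\<lambda>(i,j). g i j))"
proof -
  have "mat k k (\<lambda>(i,j). f i j) = mat k k (\<lambda>(i,j). g i j)" by (rule eq_matI) (auto simp: assms)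
  thus ?thesis by simp
qed

text \<open>Cauchy-Binet for a bidiagonal right factor.\<close>
lemma bcb:
  assumes "L \<le> K"
  shows "det (mat K K (\<lambda>(i,j). if j < L then \<alpha> j * X i j + \<beta> j * X i (Suc j) else Y i j))
    = (\<Sum>s\<le>L. ((\<Prod>j<s. \<alpha> j) * (\<Prod>j\<in>{s..<L}. \<beta> j)) *
        det (mat K K (\<lambda>(i,j). if j < L then X i (if j < s then j else Suc j) else (Y i j::'a::comm_ring_1))))"
  using assms
proof (induct L arbitrary: Y)
  case 0
  then show ?case by simp
next
  case (Suc L)
  let ?c = "\<lambda>s. (\<Prod>j<s. \<alpha> j) * (\<Prod>j\<in>{s..<L}. \<beta> j)"
  define Y1 where "Y1 = (\<lambda>i j. if j = L then X i L else Y i j)"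
  define Y2 where "Y2 = (\<lambda>i j. if j = L then X i (Suc L) else Y i j)"
  have L: "L < K" using Suc by simp
  have "det (mat K K (\<lambda>(i,j). if j < Suc L then \<alpha> j * X i j + \<beta> j * X i (Suc j) else Y i j))
    = det (mat K K (\<lambda>(i,j). if j = L then \<alpha> L * X i L + \<beta> L * X i (Suc L) else
        (if j < L then \<alpha> j * X i j + \<beta> j * X i (Suc j) else Y i j)))"
    by (rule det_mat_cong) auto
  also have "\<dots> = \<alpha> L * det (mat K K (\<lambda>(i,j). if j < L then \<alpha> j * X i j + \<beta> j * X i (Suc j) else Y1 i j))
     + \<beta> L * det (mat K K (\<lambda>(i,j). if j < L then \<alpha> j * X i j + \<beta> j * X i (Suc j) else Y2 i j))"
    by (subst det_col_lin[OF L], unfold Y1_def Y2_def) (auto intro!: arg_cong2[where f="(+)"] arg_cong2[where f="(*)"] det_mat_cong)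
  also have "det (mat K K (\<lambda>(i,j). if j < L then \<alpha> j * X i j + \<beta> j * X i (Suc j) else Y1 i j))
     = ?c L * det (mat K K (\<lambda>(i,j). if j < Suc L then X i j else Y i j))"
  proof -
    have z: "det (mat K K (\<lambda>(i,j). if j < L then X i (if j < s then j else Suc j) else Y1 i j)) = 0"
      if "s < L" for s
      by (rule det_ident_cols[of "L - 1" L]) (use that L in \<open>auto simp: Y1_def\<close>)
    have "det (mat K K (\<lambda>(i,j). if j < L then \<alpha> j * X i j + \<beta> j * X i (Suc j) else Y1 i j))
      = (\<Sum>s\<le>L. ?c s * det (mat K K (\<lambda>(i,j). if j < L then X i (if j < s then j else Suc j) else Y1 i j)))"
      using Suc by simp
    also have "\<dots> = ?c L * det (mat K K (\<lambda>(i,j). if j < L then X i (if j < L then j else Suc j) else Y1 i j))"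
      by (subst sum.remove[of _ L]) (auto simp: z intro!: sum.neutral)
    also have "det (mat K K (\<lambda>(i,j). if j < L then X i (if j < L then j else Suc j) else Y1 i j))
      = det (mat K K (\<lambda>(i,j). if j < Suc L then X i j else Y i j))"
      by (rule det_mat_cong) (auto simp: Y1_def less_Suc_eq)
    finally show ?thesis .
  qed
  also have "det (mat K K (\<lambda>(i,j). if j < L then \<alpha> j * X i j + \<beta> j * X i (Suc j) else Y2 i j))
     = (\<Sum>s\<le>L. ?c s * det (mat K K (\<lambda>(i,j). if j < Suc L then X i (if j < s then j else Suc j) else Y i j)))"
  proof -
    have "det (mat K K (\<lambda>(i,j). if j < L then \<alpha> j * X i j + \<beta> j * X i (Suc j) else Y2 i j))
      = (\<Sum>s\<le>L. ?c s * det (mat K K (\<lambda>(i,j). if j < L then X i (if j < s then j else Suc j) else Y2 i j)))"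
      using Suc by simp
    also have "\<dots> = (\<Sum>s\<le>L. ?c s * det (mat K K (\<lambda>(i,j). if j < Suc L then X i (if j < s then j else Suc j) else Y i j)))"
      by (intro sum.cong refl arg_cong2[where f="(*)"] det_mat_cong) (auto simp: Y2_def less_Suc_eq)
    finally show ?thesis .
  qed
  finally have e: "det (mat K K (\<lambda>(i,j). if j < Suc L then \<alpha> j * X i j + \<beta> j * X i (Suc j) else Y i j))
    = \<alpha> L * (?c L * det (mat K K (\<lambda>(i,j). if j < Suc L then X i j else Y i j)))
     + \<beta> L * (\<Sum>s\<le>L. ?c s * det (mat K K (\<lambda>(i,j). if j < Suc L then X i (if j < s then j else Suc j) else Y i j)))" .
  have "(\<Sum>s\<le>Suc L. ((\<Prod>j<s. \<alpha> j) * (\<Prod>j\<in>{s..<Suc L}. \<beta> j)) *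
        det (mat K K (\<lambda>(i,j). if j < Suc L then X i (if j < s then j else Suc j) else Y i j)))
     = (\<Sum>s\<le>L. \<beta> L * (?c s * det (mat K K (\<lambda>(i,j). if j < Suc L then X i (if j < s then j else Suc j) else Y i j))))
       + \<alpha> L * (?c L * det (mat K K (\<lambda>(i,j). if j < Suc L then X i j else Y i j)))"
  proof -
    have a: "(\<Prod>j\<in>{s..<Suc L}. \<beta> j) = (\<Prod>j\<in>{s..<L}. \<beta> j) * \<beta> L" if "s \<le> L" for s
      using that by (simp add: prod.atLeastLessThan_Suc)
    have b: "(\<Prod>j\<in>{s..<Suc L}. \<beta> j) = (\<Prod>j\<in>{s..<L}. \<beta> j) * \<beta> L" if "s \<in> {..L}" for s
      using a that by simp
    let ?D = "\<lambda>s. det (mat K K (\<lambda>(i,j). if j < Suc L then X i (if j < s then j else Suc j) else Y i j))"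
    have d: "?D (Suc L) = det (mat K K (\<lambda>(i,j). if j < Suc L then X i j else Y i j))"
      by (rule det_mat_cong) auto
    have sc: "(\<Sum>s\<le>L. ((\<Prod>j<s. \<alpha> j) * (\<Prod>j\<in>{s..<Suc L}. \<beta> j)) * ?D s)
       = (\<Sum>s\<le>L. \<beta> L * (?c s * ?D s))"
      by (rule sum.cong) (auto simp: b)
    have "(\<Sum>s\<le>Suc L. ((\<Prod>j<s. \<alpha> j) * (\<Prod>j\<in>{s..<Suc L}. \<beta> j)) * ?D s)
      = (\<Sum>s\<le>L. ((\<Prod>j<s. \<alpha> j) * (\<Prod>j\<in>{s..<Suc L}. \<beta> j)) * ?D s)
        + ((\<Prod>j<Suc L. \<alpha> j) * (\<Prod>j\<in>{Suc L..<Suc L}. \<beta> j)) * ?D (Suc L)"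
      by (rule sum.atMost_Suc)
    also have "\<dots> = (\<Sum>s\<le>L. \<beta> L * (?c s * ?D s)) + \<alpha> L * (?c L * det (mat K K (\<lambda>(i,j). if j < Suc L then X i j else Y i j)))"
      unfolding sc d by (simp add: lessThan_Suc algebra_simps)
    finally show ?thesis .

  qed
  then show ?case unfolding e by (simp add: sum_distrib_left algebra_simps)
qed



definition zs :: "(nat \<Rightarrow> nat \<Rightarrow> complex) \<Rightarrow> nat \<Rightarrow> nat \<Rightarrow> complex" where
  "zs z = (\<lambda>i j. z (Suc i) (Suc j))"

definition ext1 :: "complex mat \<Rightarrow> complex mat" where
  "ext1 B = mat (Suc (dim_row B)) (Suc (dim_col B)) (\<lambda>(i,j). if i = 0 then (if j = 0 then 1 else 0)
      else if j = 0 then 0 else B $$ (i - 1, j - 1))"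

lemma Wmat_carrier[simp]: "Wmat N i y \<in> carrier_mat N N"
  by (simp add: Wmat_def)

lemma Wmat_dims[simp]: "dim_row (Wmat N i y) = N" "dim_col (Wmat N i y) = N"
  by (simp_all add: Wmat_def)

lemma PhiAux_carrier[simp]: "PhiAux N z p \<in> carrier_mat N N"
  by (induct p) (auto intro: mult_carrier_mat)

lemma PhiAux_dims[simp]: "dim_row (PhiAux N z p) = N" "dim_col (PhiAux N z p) = N"
  using carrier_matD[OF PhiAux_carrier[of N z p]] by auto

lemma ext1_dims[simp]: "dim_row (ext1 B) = Suc (dim_row B)" "dim_col (ext1 B) = Suc (dim_col B)"
  by (simp_all add: ext1_def)

lemma ext1_carrier[simp]: "B \<in> carrier_mat N N \<Longrightarrow> ext1 B \<in> carrier_mat (Suc N) (Suc N)"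
  by (auto simp: ext1_def)

lemma sum_delta_Suc: "(\<Sum>t<N. if Suc t = b then f t else 0) = (if 1 \<le> b \<and> b - 1 < N then f (b - 1) else (0::'a::comm_monoid_add))"
  by (cases b) (auto simp: sum.delta)

lemma Wmat_ext1:
  assumes "1 \<le> i"
  shows "Wmat (Suc N) (Suc i) y = ext1 (Wmat N i (\<lambda>k. y (Suc k)))"
  using assms by (intro eq_matI) (auto simp: Wmat_def ext1_def Let_def)

lemma Wmat_cong:
  assumes "\<And>k. i \<le> k \<Longrightarrow> y k = y' k"
  shows "Wmat N i y = Wmat N i y'"
  using assms by (intro eq_matI) (auto simp: Wmat_def Let_def)

lemma Wargs_zs: "i \<le> k \<Longrightarrow> Wargs z (Suc i) (Suc k) = Wargs (zs z) i k"
  by (auto simp: Wargs_def zs_def)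

lemma ext1_mult:
  assumes A: "A \<in> carrier_mat N N" and B: "B \<in> carrier_mat N N"
  shows "ext1 A * ext1 B = ext1 (A * B)"
proof (rule eq_matI)
  fix i j assume i: "i < dim_row (ext1 (A * B))" and j: "j < dim_col (ext1 (A * B))"
  hence i': "i < Suc N" and j': "j < Suc N" using A B by (auto simp: ext1_def)
  have "(ext1 A * ext1 B) $$ (i,j) = (\<Sum>t<Suc N. ext1 A $$ (i,t) * ext1 B $$ (t,j))"
    using A B i' j' by (auto simp: ext1_def scalar_prod_def row_def col_def lessThan_atLeast0 intro!: sum.cong)
  also have "\<dots> = ext1 A $$ (i,0) * ext1 B $$ (0,j) + (\<Sum>t<N. ext1 A $$ (i,Suc t) * ext1 B $$ (Suc t,j))"
    by (rule sum.lessThan_Suc_shift)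
  also have "\<dots> = ext1 (A * B) $$ (i,j)"
    using A B i' j' by (auto simp: ext1_def scalar_prod_def row_def col_def lessThan_atLeast0 intro!: sum.cong)
  finally show "(ext1 A * ext1 B) $$ (i, j) = ext1 (A * B) $$ (i, j)" by simp
qed (use A B in \<open>auto simp: ext1_def\<close>)

lemma ext1_one: "ext1 (1\<^sub>m N) = 1\<^sub>m (Suc N)"
  by (intro eq_matI) (auto simp: ext1_def)

lemma PhiAux_peel:
  "PhiAux (Suc N) z (Suc p) = ext1 (PhiAux N (zs z) p) * Wmat (Suc N) 1 (Wargs z 1)"
proof (induct p)
  case 0
  then show ?case by (simp add: ext1_one)
next
  case (Suc p)
  have W: "Wmat (Suc N) (Suc (Suc p)) (Wargs z (Suc (Suc p))) = ext1 (Wmat N (Suc p) (Wargs (zs z) (Suc p)))"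
    by (subst Wmat_ext1) (auto intro!: arg_cong[where f=ext1] Wmat_cong simp: Wargs_zs)
  have "PhiAux (Suc N) z (Suc (Suc p)) = ext1 (Wmat N (Suc p) (Wargs (zs z) (Suc p))) *
     (ext1 (PhiAux N (zs z) p) * Wmat (Suc N) 1 (Wargs z 1))"
    using Suc by (simp add: W)
  also have "\<dots> = (ext1 (Wmat N (Suc p) (Wargs (zs z) (Suc p))) * ext1 (PhiAux N (zs z) p)) * Wmat (Suc N) 1 (Wargs z 1)"
    by (rule assoc_mult_mat[symmetric]) auto
  also have "\<dots> = ext1 (PhiAux N (zs z) (Suc p)) * Wmat (Suc N) 1 (Wargs z 1)"
    by (simp add: ext1_mult[of _ N])
  finally show ?case .
qed

lemma PhiAux_col_entry:
  assumes a: "a < Suc N" and b: "b < Suc N"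
  shows "PhiAux (Suc N) z (Suc p) $$ (a,b) =
    (if a = 0 then (if b = 0 then z 1 1 else 0)
     else (if b < N then PhiAux N (zs z) p $$ (a - 1, b) else 0)
        + (if 1 \<le> b then Wargs z 1 (Suc b) * PhiAux N (zs z) p $$ (a - 1, b - 1) else 0))"
proof -
  let ?B = "PhiAux N (zs z) p" and ?W = "Wmat (Suc N) 1 (Wargs z 1)"
  have "PhiAux (Suc N) z (Suc p) $$ (a,b) = (\<Sum>t<Suc N. ext1 ?B $$ (a,t) * ?W $$ (t,b))"
    unfolding PhiAux_peel using a b
    by (auto simp: ext1_def scalar_prod_def row_def col_def lessThan_atLeast0 intro!: sum.cong)
  also have "\<dots> = ext1 ?B $$ (a,0) * ?W $$ (0,b) + (\<Sum>t<N. ext1 ?B $$ (a,Suc t) * ?W $$ (Suc t,b))"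
    by (rule sum.lessThan_Suc_shift)
  also have "\<dots> = (if a = 0 then (if b = 0 then z 1 1 else 0)
     else (if b < N then ?B $$ (a - 1, b) else 0)
        + (if 1 \<le> b then Wargs z 1 (Suc b) * ?B $$ (a - 1, b - 1) else 0))"
  proof (cases "a = 0")
    case True
    then show ?thesis using a b by (auto simp: ext1_def Wmat_def Wargs_def)
  next
    case False
    have "(\<Sum>t<N. ext1 ?B $$ (a,Suc t) * ?W $$ (Suc t,b))
      = (\<Sum>t<N. (if t = b then ?B $$ (a - 1, t) else 0) + (if Suc t = b then Wargs z 1 (Suc b) * ?B $$ (a - 1, t) else 0))"
      using a b False by (intro sum.cong refl) (auto simp: ext1_def Wmat_def Let_def)
    also have "\<dots> = (if b < N then ?B $$ (a - 1, b) else 0)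
        + (if 1 \<le> b then Wargs z 1 (Suc b) * ?B $$ (a - 1, b - 1) else 0)"
      using b by (auto simp: sum.distrib sum.delta' sum_delta_Suc split: if_splits)
    finally show ?thesis using False a by (auto simp: ext1_def Wmat_def)
  qed
  finally show ?thesis .
qed

lemma PhiAux_row_entry:
  assumes a: "a < N" and b: "b < N"
  shows "PhiAux N z (Suc p) $$ (a,b) =
    (if a < p then 1 else Wargs z (Suc p) (Suc a)) * PhiAux N z p $$ (a, b)
    + (if p < a then PhiAux N z p $$ (a - 1, b) else 0)"
proof -
  let ?P = "PhiAux N z p" and ?W = "Wmat N (Suc p) (Wargs z (Suc p))"
  have "PhiAux N z (Suc p) $$ (a,b) = (\<Sum>t<N. ?W $$ (a,t) * ?P $$ (t,b))"
    using a b by (auto simp: scalar_prod_def row_def col_def lessThan_atLeast0 intro!: sum.cong)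
  also have "\<dots> = (\<Sum>t<N. (if t = a then (if a < p then 1 else Wargs z (Suc p) (Suc a)) * ?P $$ (t,b) else 0)
     + (if Suc t = a \<and> p < a then ?P $$ (t,b) else 0))"
    using a b by (intro sum.cong refl) (auto simp: Wmat_def Let_def)
  also have "\<dots> = (if a < p then 1 else Wargs z (Suc p) (Suc a)) * ?P $$ (a, b)
    + (if p < a then ?P $$ (a - 1, b) else 0)"
    using a by (auto simp: sum.distrib sum.delta' sum_delta_Suc split: if_splits)
  finally show ?thesis .
qed



definition dm :: "complex mat \<Rightarrow> nat \<Rightarrow> (nat \<Rightarrow> nat) \<Rightarrow> (nat \<Rightarrow> nat) \<Rightarrow> complex" where
  "dm M k r c = det (mat k k (\<lambda>(i,j). M $$ (r i, c j)))"

lemma pick_mono_image: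
  assumes mono: "\<And>i j. i < j \<Longrightarrow> j < k \<Longrightarrow> r i < r j" and i: "i < k"
  shows "pick (r ` {..<k}) i = r i"
proof -
  let ?S = "r ` {..<k}"
  have "{a \<in> ?S. a < r i} = r ` {..<i}"
  proof
    show "{a \<in> ?S. a < r i} \<subseteq> r ` {..<i}"
    proof
      fix a assume "a \<in> {a \<in> ?S. a < r i}"
      then obtain j where j: "j < k" "a = r j" "r j < r i" by auto
      have "j < i"
      proof (rule ccontr)
        assume "\<not> j < i"
        hence "i = j \<or> i < j" by auto
        thus False using mono[of i j] j i by auto
      qed
      thus "a \<in> r ` {..<i}" using j by auto
    qed
    show "r ` {..<i} \<subseteq> {a \<in> ?S. a < r i}" using mono i by auto
  qed
  moreover have "inj_on r {..<i}"
    by (rule inj_onI) (metis lessThan_iff linorder_neqE_nat mono i order.strict_trans less_irrefl)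
  ultimately have "card {a \<in> ?S. a < r i} = i" by (simp add: card_image)
  moreover have "r i \<in> ?S" using i by auto
  ultimately show ?thesis using pick_card_in_set[of "r i" ?S] by simp
qed

lemma minor_dm:
  assumes M: "M \<in> carrier_mat n n"
    and rm: "\<And>i j. i < j \<Longrightarrow> j < k \<Longrightarrow> r i < r j" and cm: "\<And>i j. i < j \<Longrightarrow> j < k \<Longrightarrow> c i < c j"
    and rb: "\<And>i. i < k \<Longrightarrow> r i < n" and cb: "\<And>i. i < k \<Longrightarrow> c i < n"
    and I: "(\<lambda>x. x - 1) ` I = r ` {..<k}" and J: "(\<lambda>x. x - 1) ` J = c ` {..<k}"
  shows "minor M I J = dm M k r c"
proof -
  have injr: "inj_on r {..<k}"
    by (rule inj_onI) (metis lessThan_iff linorder_neqE_nat rm less_irrefl)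
  have injc: "inj_on c {..<k}"
    by (rule inj_onI) (metis lessThan_iff linorder_neqE_nat cm less_irrefl)
  have cr: "card {i. i < dim_row M \<and> i \<in> r ` {..<k}} = k"
  proof -
    have "{i. i < dim_row M \<and> i \<in> r ` {..<k}} = r ` {..<k}" using M rb by auto
    thus ?thesis using injr by (simp add: card_image)
  qed
  have cc: "card {i. i < dim_col M \<and> i \<in> c ` {..<k}} = k"
  proof -
    have "{i. i < dim_col M \<and> i \<in> c ` {..<k}} = c ` {..<k}" using M cb by auto
    thus ?thesis using injc by (simp add: card_image)
  qed
  have "submatrix M (r ` {..<k}) (c ` {..<k}) = mat k k (\<lambda>(i,j). M $$ (r i, c j))"
    by (rule eq_matI) (auto simp: submatrix_def cr cc pick_mono_image rm cm)
  thus ?thesis unfolding minor_def dm_def I J by simp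
qed

lemma dm_cong:
  assumes "\<And>i j. i < k \<Longrightarrow> j < k \<Longrightarrow> M $$ (r i, c j) = M' $$ (r' i, c' j)"
  shows "dm M k r c = dm M' k r' c'"
  unfolding dm_def by (rule det_mat_cong) (use assms in auto)

lemma peel_P1:
  assumes r: "\<And>i. i < k \<Longrightarrow> 1 \<le> r i \<and> r i < Suc N" and k: "k \<le> N"
  shows "dm (PhiAux (Suc N) z (Suc p)) k r (\<lambda>j. j) = dm (PhiAux N (zs z) p) k (\<lambda>i. r i - 1) (\<lambda>j. j)"
proof -
  let ?B = "PhiAux N (zs z) p"
  let ?X = "\<lambda>i t. ?B $$ (r i - 1, t)"
  let ?T = "\<lambda>t j. (if t = j then 1 else 0) + (if Suc t = j then Wargs z 1 (Suc j) else 0)"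
  have e: "PhiAux (Suc N) z (Suc p) $$ (r i, j) = (\<Sum>t<k. ?X i t * ?T t j)" if "i < k" "j < k" for i j
  proof -
    have "(\<Sum>t<k. ?X i t * ?T t j) = (\<Sum>t<k. (if t = j then ?X i t else 0) + (if Suc t = j then Wargs z 1 (Suc j) * ?X i t else 0))"
      by (rule sum.cong) (auto simp: algebra_simps)
    also have "\<dots> = ?X i j + (if 1 \<le> j then Wargs z 1 (Suc j) * ?X i (j - 1) else 0)"
      using that by (auto simp: sum.distrib sum.delta' sum_delta_Suc)
    finally show ?thesis using r[OF that(1)] that k by (subst PhiAux_col_entry) auto
  qed
  have "dm (PhiAux (Suc N) z (Suc p)) k r (\<lambda>j. j) = det (mat k k (\<lambda>(i,j). \<Sum>t<k. ?X i t * ?T t j))"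
    unfolding dm_def by (rule det_mat_cong) (simp add: e del: PhiAux.simps)
  also have "\<dots> = det (mat k k (\<lambda>(i,j). ?X i j)) * det (mat k k (\<lambda>(i,j). ?T i j))"
    by (rule det_prod_fun)
  also have "det (mat k k (\<lambda>(i,j). ?T i j)) = 1"
    by (subst det_upper_fun) auto
  finally show ?thesis by (simp add: dm_def)
qed

definition cK :: "nat \<Rightarrow> nat \<Rightarrow> nat" where
  "cK K j = (if Suc j < K then j else K)"

lemma peel_P2:
  assumes r: "\<And>i. i < K \<Longrightarrow> 1 \<le> r i \<and> r i < Suc N" and K: "1 \<le> K" "K \<le> N"
  shows "dm (PhiAux (Suc N) z (Suc p)) K r (cK K) =
     (if K < N then dm (PhiAux N (zs z) p) K (\<lambda>i. r i - 1) (cK K) else 0)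
     + Wargs z 1 (Suc K) * dm (PhiAux N (zs z) p) K (\<lambda>i. r i - 1) (\<lambda>j. j)"
proof -
  let ?B = "PhiAux N (zs z) p"
  let ?X = "\<lambda>i t. ?B $$ (r i - 1, t)"
  let ?u = "\<lambda>i. if K < N then ?B $$ (r i - 1, K) else 0"
  let ?Q = "\<lambda>i t. if t = K - 1 then 1 * ?u i + Wargs z 1 (Suc K) * ?X i (K - 1) else ?X i t"
  let ?T = "\<lambda>t j. if j = K - 1 then (if t = j then 1 else 0) else
     (if t = j then 1 else 0) + (if Suc t = j then Wargs z 1 (Suc j) else 0)"
  have e: "PhiAux (Suc N) z (Suc p) $$ (r i, cK K j) = (\<Sum>t<K. ?Q i t * ?T t j)" if "i < K" "j < K" for i j
  proof (cases "j = K - 1")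
    case True
    have "(\<Sum>t<K. ?Q i t * ?T t j) = (\<Sum>t<K. if t = K - 1 then ?Q i t else 0)"
      using True by (intro sum.cong) auto
    also have "\<dots> = ?Q i (K - 1)" using K by (simp add: sum.delta')
    finally show ?thesis using r[OF that(1)] that K True
      by (subst PhiAux_col_entry) (auto simp: cK_def)
  next
    case False
    have "(\<Sum>t<K. ?Q i t * ?T t j) = (\<Sum>t<K. (if t = j then ?X i t else 0) + (if Suc t = j then Wargs z 1 (Suc j) * ?X i t else 0))"
      using False that by (intro sum.cong) (auto simp: algebra_simps)
    also have "\<dots> = ?X i j + (if 1 \<le> j then Wargs z 1 (Suc j) * ?X i (j - 1) else 0)"
      using that by (auto simp: sum.distrib sum.delta' sum_delta_Suc)
    finally show ?thesis using r[OF that(1)] that K False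
      by (subst PhiAux_col_entry) (auto simp: cK_def)
  qed
  have "dm (PhiAux (Suc N) z (Suc p)) K r (cK K) = det (mat K K (\<lambda>(i,j). \<Sum>t<K. ?Q i t * ?T t j))"
    unfolding dm_def by (rule det_mat_cong) (simp add: e del: PhiAux.simps)
  also have "\<dots> = det (mat K K (\<lambda>(i,j). ?Q i j)) * det (mat K K (\<lambda>(i,j). ?T i j))"
    by (rule det_prod_fun)
  also have "det (mat K K (\<lambda>(i,j). ?T i j)) = 1"
    by (subst det_upper_fun) (auto intro!: prod.neutral)
  also have "det (mat K K (\<lambda>(i,j). ?Q i j)) =
     1 * det (mat K K (\<lambda>(i,j). if j = K - 1 then ?u i else ?X i j))
     + Wargs z 1 (Suc K) * det (mat K K (\<lambda>(i,j). if j = K - 1 then ?X i (K - 1) else ?X i j))"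
    using K by (intro det_col_lin) auto
  also have "det (mat K K (\<lambda>(i,j). if j = K - 1 then ?X i (K - 1) else ?X i j)) = dm ?B K (\<lambda>i. r i - 1) (\<lambda>j. j)"
    unfolding dm_def by (rule det_mat_cong) auto
  also have "det (mat K K (\<lambda>(i,j). if j = K - 1 then ?u i else ?X i j)) =
      (if K < N then dm ?B K (\<lambda>i. r i - 1) (cK K) else 0)"
  proof (cases "K < N")
    case True
    then show ?thesis unfolding dm_def by (simp, intro det_mat_cong) (auto simp: cK_def)
  next
    case False
    have "det (mat K K (\<lambda>(i,j). if j = K - 1 then ?u i else ?X i j)) =
          det (mat K K (\<lambda>(i,j). if j = K - 1 then 0 * ?X i (K - 1) + 0 * ?X i (K - 1) else ?X i j))"
      using False by (intro det_mat_cong) auto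
    also have "\<dots> = 0 * det (mat K K (\<lambda>(i,j). if j = K - 1 then ?X i (K - 1) else ?X i j))
       + 0 * det (mat K K (\<lambda>(i,j). if j = K - 1 then ?X i (K - 1) else ?X i j))"
      using K by (intro det_col_lin) auto
    also have "\<dots> = 0" by simp
    finally show ?thesis using False by simp
  qed
  finally show ?thesis by simp
qed

lemma peel_R1:
  assumes a: "a \<le> p" "a + k \<le> N" and c: "\<And>j. j < k \<Longrightarrow> c j < N"
  shows "dm (PhiAux N z (Suc p)) k (\<lambda>i. a + i) c =
     (\<Prod>i<k. if a + i < p then 1 else Wargs z (Suc p) (Suc (a + i))) * dm (PhiAux N z p) k (\<lambda>i. a + i) c"
proof -
  let ?P = "PhiAux N z p"
  let ?d = "\<lambda>i. if a + i < p then 1 else Wargs z (Suc p) (Suc (a + i))"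
  let ?T = "\<lambda>i t. (if t = i then ?d i else 0) + (if Suc t = i \<and> p < a + i then 1 else 0)"
  have e: "PhiAux N z (Suc p) $$ (a + i, c j) = (\<Sum>t<k. ?T i t * ?P $$ (a + t, c j))" if "i < k" "j < k" for i j
  proof -
    have "(\<Sum>t<k. ?T i t * ?P $$ (a + t, c j)) = (\<Sum>t<k. (if t = i then ?d i * ?P $$ (a + t, c j) else 0)
        + (if Suc t = i then (if p < a + i then ?P $$ (a + t, c j) else 0) else 0))"
      by (intro sum.cong) (auto simp: algebra_simps)
    also have "\<dots> = ?d i * ?P $$ (a + i, c j) + (if p < a + i then ?P $$ (a + i - 1, c j) else 0)"
      using that a by (auto simp: sum.distrib sum.delta sum_delta_Suc)
    finally show ?thesis using that a c by (subst PhiAux_row_entry) auto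
  qed
  have "dm (PhiAux N z (Suc p)) k (\<lambda>i. a + i) c = det (mat k k (\<lambda>(i,j). \<Sum>t<k. ?T i t * ?P $$ (a + t, c j)))"
    unfolding dm_def by (rule det_mat_cong) (simp add: e del: PhiAux.simps)
  also have "\<dots> = det (mat k k (\<lambda>(i,j). ?T i j)) * dm ?P k (\<lambda>i. a + i) c"
    unfolding dm_def by (rule det_prod_fun)
  also have "det (mat k k (\<lambda>(i,j). ?T i j)) = (\<Prod>i<k. ?d i)"
    by (subst det_lower_fun) auto
  finally show ?thesis .
qed

lemma det_row0:
  assumes "\<And>j. j < Suc k \<Longrightarrow> f 0 j = (if j = 0 then d else 0)"
  shows "det (mat (Suc k) (Suc k) (\<lambda>(i,j). f i j)) = d * det (mat k k (\<lambda>(i,j). f (Suc i) (Suc j)))"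
proof -
  let ?A = "mat (Suc k) (Suc k) (\<lambda>(i,j). f i j)"
  have "det ?A = (\<Sum>j<Suc k. ?A $$ (0,j) * cofactor ?A 0 j)"
    by (rule laplace_expansion_row) auto
  also have "\<dots> = (\<Sum>j<Suc k. if j = 0 then d * cofactor ?A 0 0 else 0)"
    using assms by (intro sum.cong) auto
  also have "\<dots> = d * cofactor ?A 0 0" by (simp add: sum.delta')
  also have "mat_delete ?A 0 0 = mat k k (\<lambda>(i,j). f (Suc i) (Suc j))"
    unfolding mat_delete_def by (intro eq_matI) auto
  hence "cofactor ?A 0 0 = det (mat k k (\<lambda>(i,j). f (Suc i) (Suc j)))" by (simp add: cofactor_def)
  finally show ?thesis by simp
qed



definition zsh :: "nat \<Rightarrow> (nat \<Rightarrow> nat \<Rightarrow> complex) \<Rightarrow> nat \<Rightarrow> nat \<Rightarrow> complex" where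
  "zsh a z = (\<lambda>i j. z (a + i) (a + j))"

lemma zsh_0[simp]: "zsh 0 z = z" by (simp add: zsh_def)
lemma zsh_zs: "zsh a (zs z) = zsh (Suc a) z" by (simp add: zsh_def zs_def fun_eq_iff)

definition nzq :: "nat \<Rightarrow> nat \<Rightarrow> (nat \<Rightarrow> nat \<Rightarrow> complex) \<Rightarrow> bool" where
  "nzq q N z \<longleftrightarrow> (\<forall>i j. 1 \<le> i \<longrightarrow> i \<le> q \<longrightarrow> i \<le> j \<longrightarrow> j \<le> N \<longrightarrow> z i j \<noteq> 0)"

lemma delta_gen:
  assumes "a \<le> q" "a + K \<le> N"
  shows "dm (PhiAux N z q) K (\<lambda>i. a + i) (\<lambda>j. j) = dm (PhiAux (N - a) (zsh a z) (q - a)) K (\<lambda>i. i) (\<lambda>j. j)"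
  using assms
proof (induct a arbitrary: N z q)
  case 0
  then show ?case by simp
next
  case (Suc a)
  obtain N' where N: "N = Suc N'" using Suc by (cases N) auto
  obtain q' where q: "q = Suc q'" using Suc by (cases q) auto
  have "dm (PhiAux N z q) K (\<lambda>i. Suc a + i) (\<lambda>j. j) = dm (PhiAux N' (zs z) q') K (\<lambda>i. Suc a + i - 1) (\<lambda>j. j)"
    unfolding N q by (rule peel_P1) (use Suc N in auto)
  also have "\<dots> = dm (PhiAux N' (zs z) q') K (\<lambda>i. a + i) (\<lambda>j. j)" by (rule dm_cong) auto
  also have "\<dots> = dm (PhiAux (N' - a) (zsh a (zs z)) (q' - a)) K (\<lambda>i. i) (\<lambda>j. j)"
    by (rule Suc.hyps) (use Suc N q in auto)
  finally show ?case by (simp add: N q zsh_zs)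
qed

lemma dm_full: "M \<in> carrier_mat K K \<Longrightarrow> dm M K (\<lambda>i. i) (\<lambda>j. j) = det M"
  unfolding dm_def by (rule arg_cong[where f=det]) (rule eq_matI, auto)

lemma det_Wmat: "det (Wmat N i y) = (\<Prod>r<N. if Suc r < i then 1 else y (Suc r))"
  unfolding Wmat_def by (subst det_lower_fun) (auto simp: Let_def)

lemma det_PhiAux: "det (PhiAux N z q) = (\<Prod>i<q. det (Wmat N (Suc i) (Wargs z (Suc i))))"
  by (induct q) (auto simp: det_mult[of _ N] lessThan_Suc mult.commute)

lemma tele_gen:
  assumes "b < i" "i \<le> N" "\<And>j. i \<le> j \<Longrightarrow> j \<le> N \<Longrightarrow> z i j \<noteq> 0"
  shows "(\<Prod>x<N - b. if Suc (b + x) < i then 1 else Wargs z i (Suc (b + x))) = z i N"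
  using assms
proof (induct N)
  case 0
  then show ?case by simp
next
  case (Suc N)
  have e: "Suc N - b = Suc (N - b)" using Suc by simp
  show ?case
  proof (cases "i = Suc N")
    case True
    have "(\<Prod>x<N - b. if Suc (b + x) < i then 1 else Wargs z i (Suc (b + x))) = 1"
      using True by (intro prod.neutral) auto
    thus ?thesis unfolding e using True Suc by (simp add: Wargs_def)
  next
    case False
    hence iN: "i \<le> N" using Suc by simp
    have "(\<Prod>x<N - b. if Suc (b + x) < i then 1 else Wargs z i (Suc (b + x))) = z i N"
      by (rule Suc.hyps) (use Suc iN in auto)
    moreover have "z i N \<noteq> 0" using Suc iN by auto
    ultimately show ?thesis unfolding e using Suc iN by (simp add: Wargs_def)
  qed
qed

lemma det_PhiAux_val:
  assumes "q \<le> N" "nzq q N z"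
  shows "det (PhiAux N z q) = (\<Prod>i<q. z (Suc i) N)"
  unfolding det_PhiAux det_Wmat
proof (rule prod.cong[OF refl])
  fix i assume i: "i \<in> {..<q}"
  show "(\<Prod>r<N. if Suc r < Suc i then 1 else Wargs z (Suc i) (Suc r)) = z (Suc i) N"
  proof -
    have "(\<Prod>x<N - 0. if Suc (0 + x) < Suc i then 1 else Wargs z (Suc i) (Suc (0 + x))) = z (Suc i) N"
      by (rule tele_gen) (use assms i in \<open>auto simp: nzq_def\<close>)
    thus ?thesis by (simp cong: if_cong)
  qed
qed

lemma D2_gen:
  assumes "1 \<le> a" "a \<le> q" "N = a + K" "1 \<le> K"
  shows "dm (PhiAux N z q) K (\<lambda>i. a + i) (cK K) =
     det (PhiAux K (zsh a z) (q - a)) * (\<Sum>t<a. Wargs (zsh t z) 1 (Suc K))"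
  using assms
proof (induct a arbitrary: N z q)
  case 0
  then show ?case by simp
next
  case (Suc a)
  obtain q' where q: "q = Suc q'" using Suc by (cases q) auto
  let ?N' = "a + K"
  have N: "N = Suc ?N'" using Suc by simp
  have "dm (PhiAux N z q) K (\<lambda>i. Suc a + i) (cK K) =
     (if K < ?N' then dm (PhiAux ?N' (zs z) q') K (\<lambda>i. Suc a + i - 1) (cK K) else 0)
     + Wargs z 1 (Suc K) * dm (PhiAux ?N' (zs z) q') K (\<lambda>i. Suc a + i - 1) (\<lambda>j. j)"
    unfolding N q by (rule peel_P2) (use Suc in auto)
  also have "dm (PhiAux ?N' (zs z) q') K (\<lambda>i. Suc a + i - 1) (\<lambda>j. j) = det (PhiAux K (zsh (Suc a) z) (q - Suc a))"
  proof -
    have "dm (PhiAux ?N' (zs z) q') K (\<lambda>i. Suc a + i - 1) (\<lambda>j. j) = dm (PhiAux ?N' (zs z) q') K (\<lambda>i. a + i) (\<lambda>j. j)"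
      by (rule dm_cong) auto
    also have "\<dots> = dm (PhiAux K (zsh a (zs z)) (q' - a)) K (\<lambda>i. i) (\<lambda>j. j)"
      using delta_gen[of a q' K ?N' "zs z"] Suc q by simp
    also have "\<dots> = det (PhiAux K (zsh (Suc a) z) (q - Suc a))"
      by (simp add: dm_full zsh_zs q)
    finally show ?thesis .
  qed
  also have "(if K < ?N' then dm (PhiAux ?N' (zs z) q') K (\<lambda>i. Suc a + i - 1) (cK K) else 0)
      = det (PhiAux K (zsh (Suc a) z) (q - Suc a)) * (\<Sum>t<a. Wargs (zsh (Suc t) z) 1 (Suc K))"
  proof (cases "a = 0")
    case True
    then show ?thesis by simp
  next
    case False
    have "dm (PhiAux ?N' (zs z) q') K (\<lambda>i. Suc a + i - 1) (cK K) = dm (PhiAux ?N' (zs z) q') K (\<lambda>i. a + i) (cK K)"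
      by (rule dm_cong) auto
    also have "\<dots> = det (PhiAux K (zsh a (zs z)) (q' - a)) * (\<Sum>t<a. Wargs (zsh t (zs z)) 1 (Suc K))"
      by (rule Suc.hyps) (use Suc q False in auto)
    finally show ?thesis using False by (simp add: zsh_zs q)
  qed
  finally show ?case by (simp only: sum.lessThan_Suc_shift) (simp add: algebra_simps)
qed

lemma det_one_cK:
  assumes "1 \<le> K" "K < N"
  shows "dm (1\<^sub>m N) K (\<lambda>i. i) (cK K) = 0"
proof -
  have "dm (1\<^sub>m N) K (\<lambda>i. i) (cK K) = (\<Prod>i<K. 1\<^sub>m N $$ (i, cK K i))"
    unfolding dm_def using assms by (subst det_lower_fun) (auto simp: cK_def)
  also have "\<dots> = 0"
    using assms by (intro prod_zero bexI[of _ "K - 1"]) (auto simp: cK_def)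
  finally show ?thesis .
qed

lemma E'_gen:
  assumes "a + K \<le> N" "1 \<le> K" "K < N"
  shows "dm (PhiAux N z a) K (\<lambda>i. a + i) (cK K) = (\<Sum>t<a. Wargs (zsh t z) 1 (Suc K))"
  using assms
proof (induct a arbitrary: N z)
  case 0
  then show ?case using det_one_cK[of K N] by simp
next
  case (Suc a)
  obtain N' where N: "N = Suc N'" using Suc by (cases N) auto
  have "dm (PhiAux N z (Suc a)) K (\<lambda>i. Suc a + i) (cK K) =
     (if K < N' then dm (PhiAux N' (zs z) a) K (\<lambda>i. Suc a + i - 1) (cK K) else 0)
     + Wargs z 1 (Suc K) * dm (PhiAux N' (zs z) a) K (\<lambda>i. Suc a + i - 1) (\<lambda>j. j)"
    unfolding N by (rule peel_P2) (use Suc N in auto)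
  also have "dm (PhiAux N' (zs z) a) K (\<lambda>i. Suc a + i - 1) (\<lambda>j. j) = 1"
  proof -
    have "dm (PhiAux N' (zs z) a) K (\<lambda>i. Suc a + i - 1) (\<lambda>j. j) = dm (PhiAux N' (zs z) a) K (\<lambda>i. a + i) (\<lambda>j. j)"
      by (rule dm_cong) auto
    also have "\<dots> = dm (PhiAux (N' - a) (zsh a (zs z)) 0) K (\<lambda>i. i) (\<lambda>j. j)"
      using delta_gen[of a a K N' "zs z"] Suc N by simp
    also have "\<dots> = det (1\<^sub>m K)"
      unfolding dm_def using Suc N by (intro arg_cong[where f=det] eq_matI) auto
    finally show ?thesis by simp
  qed
  also have "(if K < N' then dm (PhiAux N' (zs z) a) K (\<lambda>i. Suc a + i - 1) (cK K) else 0)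
      = (\<Sum>t<a. Wargs (zsh (Suc t) z) 1 (Suc K))"
  proof (cases "K < N'")
    case True
    have "dm (PhiAux N' (zs z) a) K (\<lambda>i. Suc a + i - 1) (cK K) = dm (PhiAux N' (zs z) a) K (\<lambda>i. a + i) (cK K)"
      by (rule dm_cong) auto
    also have "\<dots> = (\<Sum>t<a. Wargs (zsh t (zs z)) 1 (Suc K))"
      by (rule Suc.hyps) (use Suc N True in auto)
    finally show ?thesis using True by (simp add: zsh_zs)
  next
    case False
    then have "a = 0" using Suc N by simp
    then show ?thesis using False by simp
  qed
  finally show ?case by (simp only: sum.lessThan_Suc_shift) (simp add: algebra_simps)
qed

lemma D1_gen:
  assumes "1 \<le> a" "a \<le> q" "a < N"
  shows "dm (PhiAux N z q) (N - a) (\<lambda>i. if i = 0 then a - 1 else a + i) (\<lambda>j. j) =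
    dm (PhiAux (N - a + 1) (zsh (a - 1) z) (q - a + 1)) (N - a) (\<lambda>i. if i = 0 then 0 else 1 + i) (\<lambda>j. j)"
  using assms
proof (induct a arbitrary: N z q)
  case 0
  then show ?case by simp
next
  case (Suc a)
  show ?case
  proof (cases "a = 0")
    case True
    have "N - 1 + 1 = N" "q - 1 + 1 = q" using Suc by auto
    then show ?thesis unfolding True by (simp cong: if_cong)
  next
    case False
    obtain N' where N: "N = Suc N'" using Suc by (cases N) auto
    obtain q' where q: "q = Suc q'" using Suc by (cases q) auto
    have "dm (PhiAux N z q) (N - Suc a) (\<lambda>i. if i = 0 then Suc a - 1 else Suc a + i) (\<lambda>j. j)
      = dm (PhiAux N' (zs z) q') (N' - a) (\<lambda>i. (if i = 0 then Suc a - 1 else Suc a + i) - 1) (\<lambda>j. j)"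
    proof -
      have eq: "Suc N' - Suc a = N' - a" by simp
      show ?thesis unfolding N q eq by (rule peel_P1) (use Suc N False in auto)
    qed
    also have "\<dots> = dm (PhiAux N' (zs z) q') (N' - a) (\<lambda>i. if i = 0 then a - 1 else a + i) (\<lambda>j. j)"
      by (rule dm_cong) auto
    also have "\<dots> = dm (PhiAux (N' - a + 1) (zsh (a - 1) (zs z)) (q' - a + 1)) (N' - a) (\<lambda>i. if i = 0 then 0 else 1 + i) (\<lambda>j. j)"
      by (rule Suc.hyps) (use Suc N q False in auto)
    finally show ?thesis using False by (simp add: N q zsh_zs)
  qed
qed



lemma D1_row0:
  assumes "N = Suc (Suc L)" "1 \<le> q"
  shows "dm (PhiAux N w q) (Suc L) (\<lambda>i. if i = 0 then 0 else 1 + i) (\<lambda>j. j) =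
    w 1 1 * dm (PhiAux N w q) L (\<lambda>i. 2 + i) Suc"
proof -
  obtain q' where q: "q = Suc q'" using assms by (cases q) auto
  show ?thesis unfolding dm_def
  proof (subst det_row0)
    show "PhiAux N w q $$ (if 0 = 0 then 0 else 1 + 0, j) = (if j = 0 then w 1 1 else 0)" if "j < Suc L" for j
      using that assms unfolding q by (simp add: PhiAux_col_entry del: PhiAux.simps)
  qed (simp cong: if_cong)
qed

lemma D1_base1:
  assumes "N = Suc (Suc L)"
  shows "dm (PhiAux N w 1) L (\<lambda>i. 2 + i) Suc = 1"
proof -
  have "dm (PhiAux N w 1) L (\<lambda>i. 2 + i) Suc = (\<Prod>i<L. PhiAux N w 1 $$ (2 + i, Suc i))"
    unfolding dm_def using assms
    by (subst det_upper_fun) (auto simp: PhiAux_col_entry simp del: PhiAux.simps(2))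
  also have "\<dots> = 1"
    using assms by (intro prod.neutral) (auto simp: PhiAux_col_entry simp del: PhiAux.simps(2))
  finally show ?thesis .
qed

lemma D1_R1_iter:
  assumes "N = Suc (Suc L)" "nzq (d + 2) N w" "d + 2 \<le> N"
  shows "dm (PhiAux N w (d + 2)) L (\<lambda>i. 2 + i) Suc = (\<Prod>i<d. w (i + 3) N) * dm (PhiAux N w 2) L (\<lambda>i. 2 + i) Suc"
  using assms
proof (induct d)
  case 0
  then show ?case by (simp add: numeral_2_eq_2 del: PhiAux.simps)
next
  case (Suc d)
  have nz: "nzq (d + 2) N w" using Suc.prems by (auto simp: nzq_def)
  have "dm (PhiAux N w (Suc (d + 2))) L (\<lambda>i. 2 + i) Suc =
     (\<Prod>i<L. if 2 + i < d + 2 then 1 else Wargs w (Suc (d + 2)) (Suc (2 + i))) * dm (PhiAux N w (d + 2)) L (\<lambda>i. 2 + i) Suc"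
    by (rule peel_R1) (use Suc.prems in auto)
  also have "(\<Prod>i<L. if 2 + i < d + 2 then 1 else Wargs w (Suc (d + 2)) (Suc (2 + i))) = w (d + 3) N"
  proof -
    have "(\<Prod>x<N - 2. if Suc (2 + x) < Suc (d + 2) then 1 else Wargs w (Suc (d + 2)) (Suc (2 + x))) = w (Suc (d + 2)) N"
      by (rule tele_gen) (use Suc.prems in \<open>auto simp: nzq_def\<close>)
    thus ?thesis using Suc.prems by (simp add: numeral_3_eq_3 cong: if_cong)
  qed
  also have "dm (PhiAux N w (d + 2)) L (\<lambda>i. 2 + i) Suc = (\<Prod>i<d. w (i + 3) N) * dm (PhiAux N w 2) L (\<lambda>i. 2 + i) Suc"
    by (rule Suc.hyps) (use Suc.prems nz in auto)
  finally show ?case by (simp add: lessThan_Suc algebra_simps)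
qed

lemma block_det:
  assumes "s \<le> L"
  shows "det (mat L L (\<lambda>(i,j). if j < s then (if i = j then 1 else if Suc i = j then g i else 0)
      else (if i = j then e i else if i = Suc j then 1 else 0))) = (\<Prod>j<L. if j < s then 1 else (e j::complex))"
proof -
  let ?U = "\<lambda>i j. if i = j then 1 else if Suc i = j then g i else (0::complex)"
  let ?Lw = "\<lambda>i j. if i = j then e i else if i = Suc j then 1 else (0::complex)"
  let ?Z1 = "\<lambda>i t. if t < s then ?U i t else (if i = t then 1 else 0)"
  let ?Z2 = "\<lambda>t j. if j < s then (if t = j then 1 else 0) else ?Lw t j"
  have e: "(\<Sum>t<L. ?Z1 i t * ?Z2 t j) = (if j < s then ?U i j else ?Lw i j)" if "i < L" "j < L" for i j
  proof (cases "j < s")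
    case True
    have "(\<Sum>t<L. ?Z1 i t * ?Z2 t j) = (\<Sum>t<L. if t = j then ?Z1 i t else 0)"
      using True by (intro sum.cong) auto
    also have "\<dots> = ?U i j" using True that by (simp add: sum.delta')
    finally show ?thesis using True by simp
  next
    case False
    have "(\<Sum>t<L. ?Z1 i t * ?Z2 t j) = (\<Sum>t<L. if t = i then ?Lw i j else 0)"
      using False by (intro sum.cong) auto
    also have "\<dots> = ?Lw i j" using that by (simp add: sum.delta')
    finally show ?thesis using False by simp
  qed
  have "det (mat L L (\<lambda>(i,j). if j < s then ?U i j else ?Lw i j)) = det (mat L L (\<lambda>(i,j). \<Sum>t<L. ?Z1 i t * ?Z2 t j))"
    by (rule det_mat_cong) (simp add: e)
  also have "\<dots> = det (mat L L (\<lambda>(i,j). ?Z1 i j)) * det (mat L L (\<lambda>(i,j). ?Z2 i j))"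
    by (rule det_prod_fun)
  also have "det (mat L L (\<lambda>(i,j). ?Z1 i j)) = 1"
    by (subst det_upper_fun) (auto intro!: prod.neutral)
  also have "det (mat L L (\<lambda>(i,j). ?Z2 i j)) = (\<Prod>j<L. if j < s then 1 else e j)"
    by (subst det_lower_fun) (auto intro!: prod.cong)
  finally show ?thesis by simp
qed

lemma PhiAux1_entry:
  assumes "a < N" "b < N"
  shows "PhiAux N z (Suc 0) $$ (a, b) = (if a = b then Wargs z 1 (Suc a) else if a = Suc b then 1 else 0)"
  using assms by (subst PhiAux_row_entry) (auto simp del: PhiAux.simps(2))

lemma D1_H2:
  assumes N: "N = Suc (Suc L)"
  shows "dm (PhiAux N w 2) L (\<lambda>i. 2 + i) Suc =
    (\<Sum>s\<le>L. (\<Prod>j<s. Wargs w 1 (Suc (Suc j))) * (\<Prod>j<L. if j < s then 1 else Wargs (zs w) 1 (Suc (Suc j))))"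
proof -
  let ?B = "PhiAux (Suc L) (zs w) 1"
  let ?X = "\<lambda>i j. ?B $$ (Suc i, j)"
  let ?\<alpha> = "\<lambda>j. Wargs w 1 (Suc (Suc j))"
  have "dm (PhiAux N w 2) L (\<lambda>i. 2 + i) Suc =
     det (mat L L (\<lambda>(i,j). if j < L then ?\<alpha> j * ?X i j + 1 * ?X i (Suc j) else 0))"
    unfolding dm_def N
  proof (rule det_mat_cong)
    fix i j assume ij: "i < L" "j < L"
    have "PhiAux (Suc (Suc L)) w (Suc 1) $$ (2 + i, Suc j) = ?X i (Suc j) + ?\<alpha> j * ?X i j"
      using ij by (subst PhiAux_col_entry) auto
    thus "PhiAux (Suc (Suc L)) w 2 $$ (2 + i, Suc j) = (if j < L then ?\<alpha> j * ?X i j + 1 * ?X i (Suc j) else 0)"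
      using ij by (simp add: numeral_2_eq_2 del: PhiAux.simps)
  qed
  also have "\<dots> = (\<Sum>s\<le>L. ((\<Prod>j<s. ?\<alpha> j) * (\<Prod>j\<in>{s..<L}. 1)) *
        det (mat L L (\<lambda>(i,j). if j < L then ?X i (if j < s then j else Suc j) else 0)))"
    by (rule bcb) simp
  also have "\<dots> = (\<Sum>s\<le>L. (\<Prod>j<s. ?\<alpha> j) * (\<Prod>j<L. if j < s then 1 else Wargs (zs w) 1 (Suc (Suc j))))"
  proof (rule sum.cong[OF refl])
    fix s assume s: "s \<in> {..L}"
    have "det (mat L L (\<lambda>(i,j). if j < L then ?X i (if j < s then j else Suc j) else 0)) =
      det (mat L L (\<lambda>(i,j). if j < s then (if i = j then 1 else if Suc i = j then Wargs (zs w) 1 (Suc (Suc i)) else 0)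
      else (if i = j then Wargs (zs w) 1 (Suc (Suc i)) else if i = Suc j then 1 else 0)))"
      by (rule det_mat_cong) (auto simp: PhiAux1_entry simp del: PhiAux.simps(2))
    also have "\<dots> = (\<Prod>j<L. if j < s then 1 else Wargs (zs w) 1 (Suc (Suc j)))"
      by (rule block_det) (use s in auto)
    finally show "((\<Prod>j<s. ?\<alpha> j) * (\<Prod>j\<in>{s..<L}. 1)) *
        det (mat L L (\<lambda>(i,j). if j < L then ?X i (if j < s then j else Suc j) else 0)) =
        (\<Prod>j<s. ?\<alpha> j) * (\<Prod>j<L. if j < s then 1 else Wargs (zs w) 1 (Suc (Suc j)))" by simp
  qed
  finally show ?thesis .
qed



lemma tele_alpha:
  assumes "\<And>j. 1 \<le> j \<Longrightarrow> j \<le> Suc s \<Longrightarrow> w 1 j \<noteq> 0"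
  shows "w 1 1 * (\<Prod>j<s. Wargs w 1 (Suc (Suc j))) = w 1 (Suc s)"
  using assms
proof (induct s)
  case 0
  then show ?case by simp
next
  case (Suc s)
  have "w 1 (Suc s) \<noteq> 0" using Suc.prems by auto
  moreover have "w 1 1 * (\<Prod>j<s. Wargs w 1 (Suc (Suc j))) = w 1 (Suc s)"
    by (rule Suc.hyps) (use Suc.prems in auto)
  moreover have "Wargs w 1 (Suc (Suc s)) = w 1 (Suc (Suc s)) / w 1 (Suc s)" by (simp add: Wargs_def)
  moreover have "w 1 1 * (\<Prod>j<Suc s. Wargs w 1 (Suc (Suc j))) = (w 1 1 * (\<Prod>j<s. Wargs w 1 (Suc (Suc j)))) * Wargs w 1 (Suc (Suc s))"
    by (simp only: prod.lessThan_Suc mult.assoc)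
  ultimately show ?case by simp
qed

lemma tele_beta:
  assumes "s \<le> L" "\<And>j. s + 2 \<le> j \<Longrightarrow> j \<le> L + 2 \<Longrightarrow> w 2 j \<noteq> 0"
  shows "(\<Prod>j<L. if j < s then 1 else Wargs (zs w) 1 (Suc (Suc j))) = w 2 (L + 2) / w 2 (s + 2)"
  using assms
proof (induct L)
  case 0
  then show ?case by simp
next
  case (Suc L)
  show ?case
  proof (cases "s = Suc L")
    case True
    have "(\<Prod>j<Suc L. if j < s then 1 else Wargs (zs w) 1 (Suc (Suc j))) = 1"
      using True by (intro prod.neutral) auto
    moreover have "w 2 (Suc L + 2) \<noteq> 0" using Suc.prems True by auto
    ultimately show ?thesis using True by simp
  next
    case False
    have IH: "(\<Prod>j<L. if j < s then 1 else Wargs (zs w) 1 (Suc (Suc j))) = w 2 (L + 2) / w 2 (s + 2)"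
      by (rule Suc.hyps) (use Suc.prems False in auto)
    have nz: "w 2 (L + 2) \<noteq> 0" using Suc.prems False by auto
    have "Wargs (zs w) 1 (Suc (Suc L)) = w 2 (L + 3) / w 2 (L + 2)"
      by (simp add: Wargs_def zs_def numeral_3_eq_3 numeral_2_eq_2)
    then show ?thesis using False Suc.prems nz
      by (simp add: lessThan_Suc IH numeral_3_eq_3 numeral_2_eq_2)
  qed
qed

lemma D1_base2:
  assumes N: "N = Suc (Suc L)" and q: "2 \<le> q" "q \<le> N" and nz: "nzq q N w"
  shows "dm (PhiAux N w q) (Suc L) (\<lambda>i. if i = 0 then 0 else 1 + i) (\<lambda>j. j) =
    (\<Prod>i<q - 1. w (i + 2) N) * (\<Sum>s\<le>L. w 1 (Suc s) / w 2 (s + 2))"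
proof -
  obtain d where d: "q = d + 2" using q by (metis add.commute le_Suc_ex)
  have "dm (PhiAux N w q) (Suc L) (\<lambda>i. if i = 0 then 0 else 1 + i) (\<lambda>j. j) =
     w 1 1 * dm (PhiAux N w (d + 2)) L (\<lambda>i. 2 + i) Suc"
    using D1_row0[OF N, of q w] q d by simp
  also have "\<dots> = w 1 1 * ((\<Prod>i<d. w (i + 3) N) * dm (PhiAux N w 2) L (\<lambda>i. 2 + i) Suc)"
    using D1_R1_iter[OF N, of d w] nz q d by simp
  also have "dm (PhiAux N w 2) L (\<lambda>i. 2 + i) Suc =
    (\<Sum>s\<le>L. (\<Prod>j<s. Wargs w 1 (Suc (Suc j))) * (\<Prod>j<L. if j < s then 1 else Wargs (zs w) 1 (Suc (Suc j))))"
    by (rule D1_H2[OF N])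
  also have "w 1 1 * ((\<Prod>i<d. w (i + 3) N) * (\<Sum>s\<le>L. (\<Prod>j<s. Wargs w 1 (Suc (Suc j))) * (\<Prod>j<L. if j < s then 1 else Wargs (zs w) 1 (Suc (Suc j)))))
    = (\<Prod>i<d. w (i + 3) N) * (\<Sum>s\<le>L. (w 1 1 * (\<Prod>j<s. Wargs w 1 (Suc (Suc j)))) * (\<Prod>j<L. if j < s then 1 else Wargs (zs w) 1 (Suc (Suc j))))"
    by (simp add: sum_distrib_left algebra_simps)
  also have "(\<Sum>s\<le>L. (w 1 1 * (\<Prod>j<s. Wargs w 1 (Suc (Suc j)))) * (\<Prod>j<L. if j < s then 1 else Wargs (zs w) 1 (Suc (Suc j))))
     = (\<Sum>s\<le>L. w 1 (Suc s) * (w 2 N / w 2 (s + 2)))"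
  proof (rule sum.cong[OF refl])
    fix s assume s: "s \<in> {..L}"
    have "w 1 1 * (\<Prod>j<s. Wargs w 1 (Suc (Suc j))) = w 1 (Suc s)"
      by (rule tele_alpha) (use s nz q N in \<open>auto simp: nzq_def\<close>)
    moreover have "(\<Prod>j<L. if j < s then 1 else Wargs (zs w) 1 (Suc (Suc j))) = w 2 (L + 2) / w 2 (s + 2)"
      by (rule tele_beta) (use s nz q N in \<open>auto simp: nzq_def\<close>)
    ultimately show "(w 1 1 * (\<Prod>j<s. Wargs w 1 (Suc (Suc j)))) * (\<Prod>j<L. if j < s then 1 else Wargs (zs w) 1 (Suc (Suc j)))
       = w 1 (Suc s) * (w 2 N / w 2 (s + 2))" using N by simp
  qed
  also have "(\<Prod>i<d. w (i + 3) N) * (\<Sum>s\<le>L. w 1 (Suc s) * (w 2 N / w 2 (s + 2)))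
     = (\<Prod>i<q - 1. w (i + 2) N) * (\<Sum>s\<le>L. w 1 (Suc s) / w 2 (s + 2))"
  proof -
    have "(\<Prod>i<q - 1. w (i + 2) N) = w 2 N * (\<Prod>i<d. w (i + 3) N)"
    proof -
      have "q - 1 = Suc d" using d by simp
      show ?thesis unfolding \<open>q - 1 = Suc d\<close> prod.lessThan_Suc_shift by (simp add: numeral_3_eq_3 numeral_2_eq_2)
    qed
    thus ?thesis by (simp add: sum_distrib_left algebra_simps)
  qed
  finally show ?thesis .
qed

lemma D1_base1':
  assumes N: "N = Suc (Suc L)"
  shows "dm (PhiAux N w 1) (Suc L) (\<lambda>i. if i = 0 then 0 else 1 + i) (\<lambda>j. j) = w 1 1"
  using D1_row0[OF N, of 1 w] D1_base1[OF N, of w] by simp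

section \<open>Combinatorics of the sums\<close>

lemma combA:
  fixes g :: "nat \<Rightarrow> nat \<Rightarrow> complex"
  shows "(\<Sum>i = 1..m - 1. \<Sum>j = i..n - 1. g i j) = (\<Sum>k = 1..min (m - 1) (n - 1). \<Sum>s\<le>n - k - 1. g k (k + s))"
proof -
  have "(\<Sum>i = 1..m - 1. \<Sum>j = i..n - 1. g i j) = (\<Sum>i = 1..min (m - 1) (n - 1). \<Sum>j = i..n - 1. g i j)"
    by (rule sum.mono_neutral_right) auto
  also have "\<dots> = (\<Sum>k = 1..min (m - 1) (n - 1). \<Sum>s\<le>n - k - 1. g k (k + s))"
  proof (rule sum.cong[OF refl])
    fix k assume k: "k \<in> {1..min (m - 1) (n - 1)}"
    show "(\<Sum>j = k..n - 1. g k j) = (\<Sum>s\<le>n - k - 1. g k (k + s))"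
      by (rule sum.reindex_bij_witness[of _ "\<lambda>s. k + s" "\<lambda>j. j - k"]) (use k in auto)
  qed
  finally show ?thesis .
qed

lemma combB:
  fixes f :: "nat \<Rightarrow> nat \<Rightarrow> complex"
  assumes m: "1 \<le> m" and n: "1 \<le> n"
  shows "(\<Sum>i = 1..m. \<Sum>j = i..n - 1. f i j) =
     (\<Sum>k = 1..min (m - 1) (n - 1). \<Sum>t<k. f (t + 1) (t + n - k))
     + (if m < n then (\<Sum>j = 1..n - m. \<Sum>t<m. f (t + 1) (t + j)) else 0)"
proof -
  define F where "F t d = (if t + d + 2 \<le> n then f (t + 1) (t + 1 + d) else 0)" for t d
  define T where "T d = (\<Sum>t<m. F t d)" for d
  have L: "(\<Sum>i = 1..m. \<Sum>j = i..n - 1. f i j) = (\<Sum>t<m. \<Sum>d<n. F t d)"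
  proof -
    have "(\<Sum>i = 1..m. \<Sum>j = i..n - 1. f i j) = (\<Sum>t<m. \<Sum>j = t + 1..n - 1. f (t + 1) j)"
      by (rule sum.reindex_bij_witness[of _ "\<lambda>t. t + 1" "\<lambda>i. i - 1"]) (use m in auto)
    also have "\<dots> = (\<Sum>t<m. \<Sum>d<n. F t d)"
    proof (rule sum.cong[OF refl])
      fix t assume t: "t \<in> {..<m}"
      have "(\<Sum>d<n. F t d) = (\<Sum>d\<in>{..<n} \<inter> {d. t + d + 2 \<le> n}. f (t + 1) (t + 1 + d))"
        unfolding F_def by (subst sum.inter_restrict) auto
      also have "{..<n} \<inter> {d. t + d + 2 \<le> n} = {..<n - t - 1}" by auto
      also have "(\<Sum>d<n - t - 1. f (t + 1) (t + 1 + d)) = (\<Sum>j = t + 1..n - 1. f (t + 1) j)"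
        by (rule sum.reindex_bij_witness[of _ "\<lambda>j. j - (t + 1)" "\<lambda>d. t + 1 + d"]) auto
      finally show "(\<Sum>j = t + 1..n - 1. f (t + 1) j) = (\<Sum>d<n. F t d)" by simp
    qed
    finally show ?thesis .
  qed
  have swap: "(\<Sum>t<m. \<Sum>d<n. F t d) = (\<Sum>d<n. T d)" unfolding T_def by (rule sum.swap)
  have Tlast: "(\<Sum>d<n. T d) = (\<Sum>d<n - 1. T d)"
    by (rule sum.mono_neutral_right) (auto simp: T_def F_def intro!: sum.neutral)
  have Tk: "(\<Sum>t<k. f (t + 1) (t + n - k)) = T (n - 1 - k)" if "1 \<le> k" "k \<le> m - 1" "k \<le> n - 1" for k
  proof -
    have "T (n - 1 - k) = (\<Sum>t\<in>{..<m} \<inter> {t. t + (n - 1 - k) + 2 \<le> n}. f (t + 1) (t + 1 + (n - 1 - k)))"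
      unfolding T_def F_def by (subst sum.inter_restrict) auto
    also have "{..<m} \<inter> {t. t + (n - 1 - k) + 2 \<le> n} = {..<k}" using that by auto
    also have "(\<Sum>t<k. f (t + 1) (t + 1 + (n - 1 - k))) = (\<Sum>t<k. f (t + 1) (t + n - k))"
    proof (rule sum.cong[OF refl])
      fix t assume "t \<in> {..<k}"
      have eq: "t + 1 + (n - 1 - k) = t + n - k" using that by arith
      show "f (t + 1) (t + 1 + (n - 1 - k)) = f (t + 1) (t + n - k)" by (simp only: eq)
    qed
    finally show ?thesis by simp
  qed
  have Tj: "(\<Sum>t<m. f (t + 1) (t + j)) = T (j - 1)" if "1 \<le> j" "j \<le> n - m" "m < n" for j
    unfolding T_def F_def by (rule sum.cong) (use that in auto)
  show ?thesis
  proof (cases "m < n")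
    case True
    have k: "(\<Sum>k = 1..min (m - 1) (n - 1). \<Sum>t<k. f (t + 1) (t + n - k)) = (\<Sum>k = 1..m - 1. T (n - 1 - k))"
    proof (rule sum.cong)
      fix k assume "k \<in> {1..m - 1}"
      then show "(\<Sum>t<k. f (t + 1) (t + n - k)) = T (n - 1 - k)" using True by (intro Tk) auto
    qed (use True in auto)
    also have "\<dots> = (\<Sum>d = n - m..<n - 1. T d)"
      by (rule sum.reindex_bij_witness[of _ "\<lambda>d. n - 1 - d" "\<lambda>k. n - 1 - k"]) (use True m in auto)
    finally have k': "(\<Sum>k = 1..min (m - 1) (n - 1). \<Sum>t<k. f (t + 1) (t + n - k)) = (\<Sum>d = n - m..<n - 1. T d)" .
    have j: "(\<Sum>j = 1..n - m. \<Sum>t<m. f (t + 1) (t + j)) = (\<Sum>j = 1..n - m. T (j - 1))"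
    proof (rule sum.cong[OF refl])
      fix j assume "j \<in> {1..n - m}"
      then show "(\<Sum>t<m. f (t + 1) (t + j)) = T (j - 1)" using True by (intro Tj) auto
    qed
    also have "\<dots> = (\<Sum>d = 0..<n - m. T d)"
      by (rule sum.reindex_bij_witness[of _ "\<lambda>d. d + 1" "\<lambda>j. j - 1"]) auto
    finally have j': "(\<Sum>j = 1..n - m. \<Sum>t<m. f (t + 1) (t + j)) = (\<Sum>d = 0..<n - m. T d)" .
    have "(\<Sum>d = 0..<n - m. T d) + (\<Sum>d = n - m..<n - 1. T d) = (\<Sum>d = 0..<n - 1. T d)"
      by (rule sum.atLeastLessThan_concat) (use True m in auto)
    then show ?thesis using True L swap Tlast k' j' by (simp add: lessThan_atLeast0 add.commute)
  next
    case False
    have k: "(\<Sum>k = 1..min (m - 1) (n - 1). \<Sum>t<k. f (t + 1) (t + n - k)) = (\<Sum>k = 1..n - 1. T (n - 1 - k))"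
    proof (rule sum.cong)
      fix k assume "k \<in> {1..n - 1}"
      then show "(\<Sum>t<k. f (t + 1) (t + n - k)) = T (n - 1 - k)" using False by (intro Tk) auto
    qed (use False in auto)
    also have "\<dots> = (\<Sum>d<n - 1. T d)"
      by (rule sum.reindex_bij_witness[of _ "\<lambda>d. n - 1 - d" "\<lambda>k. n - 1 - k"]) (use n in auto)
    finally show ?thesis using False L swap Tlast by simp
  qed
qed



lemma img_ivl: "(\<lambda>x. x - 1) ` {a + 1..(b::nat)} = (\<lambda>i. a + i) ` {..<b - a}"
proof (intro equalityI subsetI)
  fix y assume "y \<in> (\<lambda>x. x - 1) ` {a + 1..b}"
  then obtain x where "x \<in> {a + 1..b}" "y = x - 1" by auto
  then show "y \<in> (\<lambda>i. a + i) ` {..<b - a}" by (intro image_eqI[of _ _ "x - 1 - a"]) auto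
next
  fix y assume "y \<in> (\<lambda>i. a + i) ` {..<b - a}"
  then obtain i where "i < b - a" "y = a + i" by auto
  then show "y \<in> (\<lambda>x. x - 1) ` {a + 1..b}" by (intro image_eqI[of _ _ "a + i + 1"]) auto
qed

lemma img_ivl1: "(\<lambda>x. x - 1) ` {1..(K::nat)} = (\<lambda>j. j) ` {..<K}"
  using img_ivl[of 0 K] by simp

lemma img_D1:
  fixes k n :: nat
  assumes "1 \<le> k" "k < n"
  shows "(\<lambda>x. x - 1) ` ({k} \<union> {k + 2..n}) = (\<lambda>i. if i = 0 then k - 1 else k + i) ` {..<n - k}"
proof (intro equalityI subsetI)
  fix y assume "y \<in> (\<lambda>x. x - 1) ` ({k} \<union> {k + 2..n})"
  then obtain x where x: "x \<in> {k} \<union> {k + 2..n}" "y = x - 1" by blast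
  show "y \<in> (\<lambda>i. if i = 0 then k - 1 else k + i) ` {..<n - k}"
  proof (cases "x = k")
    case True
    then show ?thesis using x assms by (intro image_eqI[of _ _ 0]) auto
  next
    case False
    then show ?thesis using x assms by (intro image_eqI[of _ _ "x - 1 - k"]) auto
  qed
next
  fix y assume "y \<in> (\<lambda>i. if i = 0 then k - 1 else k + i) ` {..<n - k}"
  then obtain i where i: "i < n - k" "y = (if i = 0 then k - 1 else k + i)" by blast
  show "y \<in> (\<lambda>x. x - 1) ` ({k} \<union> {k + 2..n})"
  proof (cases "i = 0")
    case True
    then show ?thesis using i assms by (intro image_eqI[of _ _ k]) auto
  next
    case False
    then show ?thesis using i assms by (intro image_eqI[of _ _ "k + i + 1"]) auto
  qed
qed

lemma img_cK:
  fixes K :: nat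
  assumes "1 \<le> K"
  shows "(\<lambda>x. x - 1) ` ({1..K - 1} \<union> {K + 1}) = cK K ` {..<K}"
proof (intro equalityI subsetI)
  fix y assume "y \<in> (\<lambda>x. x - 1) ` ({1..K - 1} \<union> {K + 1})"
  then obtain x where x: "x \<in> {1..K - 1} \<union> {K + 1}" "y = x - 1" by blast
  show "y \<in> cK K ` {..<K}"
  proof (cases "x = K + 1")
    case True
    then show ?thesis using x assms by (intro image_eqI[of _ _ "K - 1"]) (auto simp: cK_def)
  next
    case False
    then show ?thesis using x assms by (intro image_eqI[of _ _ "x - 1"]) (auto simp: cK_def)
  qed
next
  fix y assume "y \<in> cK K ` {..<K}"
  then obtain i where i: "i < K" "y = cK K i" by blast
  show "y \<in> (\<lambda>x. x - 1) ` ({1..K - 1} \<union> {K + 1})"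
  proof (cases "Suc i < K")
    case True
    then show ?thesis using i assms by (intro image_eqI[of _ _ "i + 1"]) (auto simp: cK_def)
  next
    case False
    then show ?thesis using i assms by (intro image_eqI[of _ _ "K + 1"]) (auto simp: cK_def)
  qed
qed

lemma cK_mono: "i < j \<Longrightarrow> j < K \<Longrightarrow> cK K i < cK K j"
  by (auto simp: cK_def)

lemma cK_le: "j < K \<Longrightarrow> cK K j \<le> K"
  by (auto simp: cK_def)

lemma Wargs_zsh: "1 \<le> K \<Longrightarrow> Wargs (zsh t z) 1 (Suc K) = z (t + 1) (t + K + 1) / z (t + 1) (t + K)"
  by (auto simp: Wargs_def zsh_def algebra_simps)



theorem lemma3p9:
  fixes m n :: nat and z :: "nat \<Rightarrow> nat \<Rightarrow> complex"
  assumes "1 \<le> m" and "1 \<le> n" and "in_GT m n z"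
  shows "decoration m n z =
    (let M = Phi m n z in
      (\<Sum>k = 1..min (m - 1) (n - 1).
         (minor M ({k} \<union> {k + 2..n}) {1..n - k}
          + minor M {k + 1..n} ({1..n - k - 1} \<union> {n - k + 1}))
         / minor M {k + 1..n} {1..n - k})
      + (if m < n then
           minor M ({m} \<union> {m + 2..n}) {1..n - m} / minor M {m + 1..n} {1..n - m}
           + (\<Sum>j = 1..n - m. minor M {m + 1..m + j} ({1..j - 1} \<union> {j + 1})
                               / minor M {m + 1..m + j} {1..j})
         else 0))"
proof -
  have Wz: "Wargs (zsh t z) (Suc 0) (Suc K) = z (t + 1) (t + K + 1) / z (t + 1) (t + K)" if "1 \<le> K" for t K
    using Wargs_zsh[OF that, of t z] by simp
  define p where "p = min m n"
  define M where "M = Phi m n z"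
  have M: "M = PhiAux n z p" by (simp add: M_def Phi_def p_def)
  have Mc: "M \<in> carrier_mat n n" by (simp add: M)
  have nz: "z i j \<noteq> 0" if "1 \<le> i" "i \<le> m" "i \<le> j" "j \<le> n" for i j
    using assms(3) that by (auto simp: in_GT_def)
  define f where "f i j = z i (j + 1) / z i j" for i j
  define g where "g i j = z i j / z (i + 1) (j + 1)" for i j

  have kterm: "(minor M ({k} \<union> {k + 2..n}) {1..n - k} + minor M {k + 1..n} ({1..n - k - 1} \<union> {n - k + 1}))
         / minor M {k + 1..n} {1..n - k}
     = (\<Sum>s\<le>n - k - 1. g k (k + s)) + (\<Sum>t<k. f (t + 1) (t + n - k))"
    if k: "k \<in> {1..min (m - 1) (n - 1)}" for k
  proof -
    have k1: "1 \<le> k" "k \<le> m - 1" "k \<le> n - 1" "k < p" "k < n" "p \<le> m" "p \<le> n"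
      using k assms by (auto simp: p_def)
    obtain k' where k': "k = Suc k'" using k1 by (cases k) auto
    define \<Delta> where "\<Delta> = det (PhiAux (n - k) (zsh k z) (p - k))"
    have nzk: "z (k + i) (k + j) \<noteq> 0" if "1 \<le> i" "i \<le> p - k" "i \<le> j" "j \<le> n - k" for i j
      by (rule nz) (use that k1 in auto)
    have "\<Delta> = (\<Prod>i<p - k. zsh k z (Suc i) (n - k))"
      unfolding \<Delta>_def
      by (rule det_PhiAux_val) (use k1 nzk in \<open>auto simp: nzq_def zsh_def\<close>)
    hence \<Delta>v: "\<Delta> = (\<Prod>i<p - k. z (Suc (k + i)) n)"
      using k1 by (simp add: zsh_def)
    have "\<forall>a\<in>{..<p - k}. z (Suc (k + a)) n \<noteq> 0"
      by (intro ballI nz) (use k1 in auto)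
    hence \<Delta>nz: "\<Delta> \<noteq> 0" unfolding \<Delta>v by simp
    have m1: "minor M {k + 1..n} {1..n - k} = \<Delta>"
    proof -
      have "minor M {k + 1..n} {1..n - k} = dm M (n - k) (\<lambda>i. k + i) (\<lambda>j. j)"
        by (rule minor_dm[OF Mc _ _ _ _ img_ivl[of k n] img_ivl1[of "n - k"]]) (use k1 in auto)
      also have "\<dots> = dm (PhiAux (n - k) (zsh k z) (p - k)) (n - k) (\<lambda>i. i) (\<lambda>j. j)"
        unfolding M by (rule delta_gen) (use k1 in auto)
      also have "\<dots> = \<Delta>" unfolding \<Delta>_def by (rule dm_full) simp
      finally show ?thesis .
    qed
    have m2: "minor M ({k} \<union> {k + 2..n}) {1..n - k} = \<Delta> * (\<Sum>s\<le>n - k - 1. g k (k + s))"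
    proof -
      have "minor M ({k} \<union> {k + 2..n}) {1..n - k} = dm M (n - k) (\<lambda>i. if i = 0 then k - 1 else k + i) (\<lambda>j. j)"
        by (rule minor_dm[OF Mc _ _ _ _ img_D1[of k n] img_ivl1[of "n - k"]]) (use k1 in auto)
      also have "\<dots> = dm (PhiAux (n - k + 1) (zsh (k - 1) z) (p - k + 1)) (n - k) (\<lambda>i. if i = 0 then 0 else 1 + i) (\<lambda>j. j)"
        unfolding M by (rule D1_gen) (use k1 in auto)
      also have "\<dots> = (\<Prod>i<p - k + 1 - 1. zsh (k - 1) z (i + 2) (n - k + 1)) *
          (\<Sum>s\<le>n - k - 1. zsh (k - 1) z 1 (Suc s) / zsh (k - 1) z 2 (s + 2))"
      proof -
        have e: "Suc (n - k - 1) = n - k" "n - k + 1 = Suc (Suc (n - k - 1))" using k1 by auto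
        have nzq2: "nzq (p - k + 1) (n - k + 1) (zsh (k - 1) z)"
          unfolding nzq_def zsh_def
        proof (intro allI impI)
          fix i j assume "1 \<le> i" "i \<le> p - k + 1" "i \<le> j" "j \<le> n - k + 1"
          then show "z (k - 1 + i) (k - 1 + j) \<noteq> 0" by (intro nz) (use k1 in auto)
        qed
        have "dm (PhiAux (n - k + 1) (zsh (k - 1) z) (p - k + 1)) (Suc (n - k - 1)) (\<lambda>i. if i = 0 then 0 else 1 + i) (\<lambda>j. j)
          = (\<Prod>i<p - k + 1 - 1. zsh (k - 1) z (i + 2) (n - k + 1)) *
          (\<Sum>s\<le>n - k - 1. zsh (k - 1) z 1 (Suc s) / zsh (k - 1) z 2 (s + 2))"
          by (rule D1_base2) (use k1 e nzq2 in auto)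
        then show ?thesis by (simp only: e(1))
      qed
      also have "\<dots> = \<Delta> * (\<Sum>s\<le>n - k - 1. g k (k + s))"
        unfolding \<Delta>v g_def using k1 k' by (simp add: zsh_def numeral_2_eq_2 algebra_simps)
      finally show ?thesis .
    qed
    have m3: "minor M {k + 1..n} ({1..n - k - 1} \<union> {n - k + 1}) = \<Delta> * (\<Sum>t<k. f (t + 1) (t + n - k))"
    proof -
      have "minor M {k + 1..n} ({1..n - k - 1} \<union> {n - k + 1}) = dm M (n - k) (\<lambda>i. k + i) (cK (n - k))"
      proof (rule minor_dm[OF Mc _ _ _ _ img_ivl[of k n] img_cK[of "n - k"]])
        show "cK (n - k) i < n" if "i < n - k" for i using cK_le[OF that] k1 by simp
      qed (use k1 in \<open>auto simp: cK_mono\<close>)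
      also have "\<dots> = \<Delta> * (\<Sum>t<k. Wargs (zsh t z) 1 (Suc (n - k)))"
        unfolding M \<Delta>_def by (rule D2_gen) (use k1 in auto)
      also have "(\<Sum>t<k. Wargs (zsh t z) 1 (Suc (n - k))) = (\<Sum>t<k. f (t + 1) (t + n - k))"
      proof (rule sum.cong[OF refl])
        fix t assume "t \<in> {..<k}"
        have e: "t + (n - k) = t + n - k" using k1 by arith
        show "Wargs (zsh t z) 1 (Suc (n - k)) = f (t + 1) (t + n - k)"
          using k1 Wz[of "n - k" t] by (simp add: f_def e)
      qed
      finally show ?thesis .
    qed
    show ?thesis unfolding m1 m2 m3 using \<Delta>nz by (simp add: field_simps)
  qed

  have mterm: "minor M ({m} \<union> {m + 2..n}) {1..n - m} / minor M {m + 1..n} {1..n - m}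
           + (\<Sum>j = 1..n - m. minor M {m + 1..m + j} ({1..j - 1} \<union> {j + 1}) / minor M {m + 1..m + j} {1..j})
        = z m m + (\<Sum>j = 1..n - m. \<Sum>t<m. f (t + 1) (t + j))" if mn: "m < n"
  proof -
    have p: "p = m" using mn by (simp add: p_def)
    have u1: "minor M ({m} \<union> {m + 2..n}) {1..n - m} = z m m"
    proof -
      have "minor M ({m} \<union> {m + 2..n}) {1..n - m} = dm M (n - m) (\<lambda>i. if i = 0 then m - 1 else m + i) (\<lambda>j. j)"
        by (rule minor_dm[OF Mc _ _ _ _ img_D1[of m n] img_ivl1[of "n - m"]]) (use mn assms in auto)
      also have "\<dots> = dm (PhiAux (n - m + 1) (zsh (m - 1) z) (m - m + 1)) (n - m) (\<lambda>i. if i = 0 then 0 else 1 + i) (\<lambda>j. j)"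
        unfolding M p by (rule D1_gen) (use mn assms in auto)
      also have "\<dots> = zsh (m - 1) z 1 1"
      proof -
        have e: "n - m - 1 + 1 = n - m" "m - m + 1 = 1" using mn by auto
        have "dm (PhiAux (Suc (Suc (n - m - 1))) (zsh (m - 1) z) 1) (Suc (n - m - 1))
           (\<lambda>i. if i = 0 then 0 else 1 + i) (\<lambda>j. j) = zsh (m - 1) z 1 1"
          by (rule D1_base1') simp
        then show ?thesis unfolding e(2) by (simp only: e(1) Suc_eq_plus1)
      qed
      also have "\<dots> = z m m" using assms by (simp add: zsh_def)
      finally show ?thesis .
    qed
    have u2: "minor M {m + 1..n} {1..n - m} = 1"
    proof -
      have "minor M {m + 1..n} {1..n - m} = dm M (n - m) (\<lambda>i. m + i) (\<lambda>j. j)"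
        by (rule minor_dm[OF Mc _ _ _ _ img_ivl[of m n] img_ivl1[of "n - m"]]) (use mn in auto)
      also have "\<dots> = dm (PhiAux (n - m) (zsh m z) (m - m)) (n - m) (\<lambda>i. i) (\<lambda>j. j)"
        unfolding M p by (rule delta_gen) (use mn in auto)
      also have "\<dots> = 1" by (subst dm_full) auto
      finally show ?thesis .
    qed
    have v: "minor M {m + 1..m + j} ({1..j - 1} \<union> {j + 1}) / minor M {m + 1..m + j} {1..j}
        = (\<Sum>t<m. f (t + 1) (t + j))" if j: "j \<in> {1..n - m}" for j
    proof -
      have j1: "1 \<le> j" "m + j \<le> n" "j < n" using j assms by auto
      have imgj: "(\<lambda>x. x - 1) ` {m + 1..m + j} = (\<lambda>i. m + i) ` {..<j}"
        using img_ivl[of m "m + j"] by simp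
      have v1: "minor M {m + 1..m + j} {1..j} = 1"
      proof -
        have "minor M {m + 1..m + j} {1..j} = dm M j (\<lambda>i. m + i) (\<lambda>j. j)"
          by (rule minor_dm[OF Mc _ _ _ _ imgj img_ivl1[of j]]) (use j1 in auto)
        also have "\<dots> = dm (PhiAux (n - m) (zsh m z) (m - m)) j (\<lambda>i. i) (\<lambda>j. j)"
          unfolding M p by (rule delta_gen) (use j1 in auto)
        also have "\<dots> = det (1\<^sub>m j)"
          unfolding dm_def using j1 by (intro arg_cong[where f=det] eq_matI) auto
        finally show ?thesis by simp
      qed
      have v2: "minor M {m + 1..m + j} ({1..j - 1} \<union> {j + 1}) = (\<Sum>t<m. f (t + 1) (t + j))"
      proof -
        have "minor M {m + 1..m + j} ({1..j - 1} \<union> {j + 1}) = dm M j (\<lambda>i. m + i) (cK j)"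
        proof (rule minor_dm[OF Mc _ _ _ _ imgj img_cK[of j]])
          show "cK j i < n" if "i < j" for i using cK_le[OF that] j1 by simp
        qed (use j1 in \<open>auto simp: cK_mono\<close>)
        also have "\<dots> = (\<Sum>t<m. Wargs (zsh t z) 1 (Suc j))"
          unfolding M p by (rule E'_gen) (use j1 in auto)
        also have "\<dots> = (\<Sum>t<m. f (t + 1) (t + j))"
          using j1 by (intro sum.cong) (auto simp: Wz f_def)
        finally show ?thesis .
      qed
      show ?thesis unfolding v1 v2 by simp
    qed
    show ?thesis unfolding u1 u2 using v by simp
  qed

  have rhs: "(\<Sum>k = 1..min (m - 1) (n - 1).
         (minor M ({k} \<union> {k + 2..n}) {1..n - k}
          + minor M {k + 1..n} ({1..n - k - 1} \<union> {n - k + 1}))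
         / minor M {k + 1..n} {1..n - k})
      + (if m < n then
           minor M ({m} \<union> {m + 2..n}) {1..n - m} / minor M {m + 1..n} {1..n - m}
           + (\<Sum>j = 1..n - m. minor M {m + 1..m + j} ({1..j - 1} \<union> {j + 1})
                               / minor M {m + 1..m + j} {1..j})
         else 0)
    = (\<Sum>k = 1..min (m - 1) (n - 1). \<Sum>s\<le>n - k - 1. g k (k + s))
      + ((\<Sum>k = 1..min (m - 1) (n - 1). \<Sum>t<k. f (t + 1) (t + n - k))
         + (if m < n then (\<Sum>j = 1..n - m. \<Sum>t<m. f (t + 1) (t + j)) else 0))
      + (if m < n then z m m else 0)"
    using kterm mterm by (simp add: sum.distrib)
  have dec: "decoration m n z = (\<Sum>i = 1..m. \<Sum>j = i..n - 1. f i j) + (\<Sum>i = 1..m - 1. \<Sum>j = i..n - 1. g i j)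
      + (if m < n then z m m else 0)"
    unfolding decoration_def f_def g_def by simp
  show ?thesis
    unfolding Let_def M_def[symmetric] rhs dec combA combB[OF assms(1,2)] by (simp add: algebra_simps)
qed


end
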